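(* Let $\mathcal T$ be a finite rooted tree of depth at most $L$, where $L\ge1$ is an integer. Let $\Delta\ge1$ and $s\ge0$. Let $W$ be a subset of the internal (non-leaf) vertices of $\mathcal T$ such that each internal vertex not in $W$ has at least $\Delta$ children, and each path from the root contains at most $s$ vertices of $W$. Then there is some $T\in\{0,\dots,L\}$ for which the number of leaves of $\mathcal T$ at depth $T$ is at least $L^{-1}\Delta^{T-s}$.
   Context: The depth of a vertex is its distance from the root. *)

theory Defs
  imports Complex_Main "HOL-Library.Sublist"
begin

text \<open>A vertex is identified with its
  position: the list of child indices on the path from the root (the root is the empty list).
  The depth of a vertex is the length of its position.\<close>

datatype rtree = Node "rtree list"

fun kids :: "rtree \<Rightarrow> rtree list" where
  "kids (Node ts) = ts"

fun subtree :: "rtree \<Rightarrow> nat list \<Rightarrow> rtree" where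
  "subtree t [] = t"
| "subtree (Node ts) (i # p) = (if i < length ts then subtree (ts ! i) p else Node [])"

inductive_set vertices :: "rtree \<Rightarrow> nat list set" for t where
  root: "[] \<in> vertices t"
| child: "p \<in> vertices t \<Longrightarrow> i < length (kids (subtree t p)) \<Longrightarrow> p @ [i] \<in> vertices t"

definition num_children :: "rtree \<Rightarrow> nat list \<Rightarrow> nat" where
  "num_children t p = length (kids (subtree t p))"

definition is_leaf :: "rtree \<Rightarrow> nat list \<Rightarrow> bool" where
  "is_leaf t p \<longleftrightarrow> p \<in> vertices t \<and> num_children t p = 0"

definition internal :: "rtree \<Rightarrow> nat list set" where
  "internal t = {p \<in> vertices t. num_children t p > 0}"

text \<open>Vertices on the path from the root to \<open>p\<close> are exactly the prefixes of \<open>p\<close>.\<close>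
definition leaves_at_depth :: "rtree \<Rightarrow> nat \<Rightarrow> nat" where
  "leaves_at_depth t d = card {p. is_leaf t p \<and> length p = d}"

end

theory Submission
  imports Defs
begin

fun valid :: "rtree \<Rightarrow> nat list \<Rightarrow> bool" where
  "valid t [] = True"
| "valid (Node ts) (i # p) = (i < length ts \<and> valid (ts ! i) p)"

lemma valid_snoc: "valid t (p @ [i]) \<longleftrightarrow> valid t p \<and> i < length (kids (subtree t p))"
proof (induction p arbitrary: t)
  case Nil then show ?case by (cases t) auto
next
  case (Cons j p) then show ?case by (cases t) auto
qed

lemma vertices_valid: "p \<in> vertices t \<longleftrightarrow> valid t p"
proof
  assume "p \<in> vertices t" then show "valid t p"
    by (induction rule: vertices.induct) (auto simp: valid_snoc)
next
  assume "valid t p" then show "p \<in> vertices t"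
  proof (induction p rule: rev_induct)
    case Nil show ?case by (rule vertices.root)
  next
    case (snoc i p) then show ?case by (auto simp: valid_snoc intro: vertices.child)
  qed
qed

lemma valid_Node_set:
  "{p. valid (Node ts) p} = {[]} \<union> (\<Union>i<length ts. Cons i ` {p. valid (ts ! i) p})"
  apply (rule set_eqI)
  subgoal for p by (cases p) auto
  done

lemma finite_valid: "finite {p. valid t p}"
proof (induction t)
  case (Node ts)
  then show ?case by (subst valid_Node_set) auto
qed

lemma nc_Cons: "i < length ts \<Longrightarrow> num_children (Node ts) (i # p) = num_children (ts ! i) p"
  by (simp add: num_children_def)

lemma nc_Nil: "num_children (Node ts) [] = length ts"
  by (simp add: num_children_def)

lemma leaf_Cons: "is_leaf (Node ts) (i # p) \<longleftrightarrow> i < length ts \<and> is_leaf (ts ! i) p"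
  by (auto simp: is_leaf_def vertices_valid nc_Cons)

lemma internal_Cons: "(i # p) \<in> internal (Node ts) \<longleftrightarrow> i < length ts \<and> p \<in> internal (ts ! i)"
  by (auto simp: internal_def vertices_valid nc_Cons)

lemma leaves_Node: "ts \<noteq> [] \<Longrightarrow>
  {p. is_leaf (Node ts) p} = (\<Union>i<length ts. Cons i ` {p. is_leaf (ts ! i) p})"
  apply (rule set_eqI)
  subgoal for p proof (cases p)
    case Nil
    assume "ts \<noteq> []"
    then show ?thesis using Nil by (auto simp: is_leaf_def nc_Nil)
  next
    case (Cons a list)
    then show ?thesis by (auto simp only: leaf_Cons) auto
  qed
  done

lemma finite_leaves: "finite {p. is_leaf t p}"
  by (rule finite_subset[OF _ finite_valid[of t]]) (auto simp: is_leaf_def vertices_valid)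

lemma prefix_set_Cons:
  "{q \<in> W. prefix q (i # p)} = (if [] \<in> W then {[]} else {}) \<union> Cons i ` {q \<in> {q. i # q \<in> W}. prefix q p}"
  by (auto simp: prefix_Cons)

lemma finite_prefixes_set: "finite {q \<in> W. prefix q p}"
proof -
  have "{q \<in> W. prefix q p} \<subseteq> set (prefixes p)" by auto
  then show ?thesis by (rule finite_subset) auto
qed

lemma card_prefix_Cons:
  "card {q \<in> W. prefix q (i # p)} = (if [] \<in> W then 1 else 0) + card {q \<in> {q. i # q \<in> W}. prefix q p}"
proof -
  have "card (Cons i ` {q \<in> {q. i # q \<in> W}. prefix q p}) = card {q \<in> {q. i # q \<in> W}. prefix q p}"
    by (rule card_image) auto
  moreover have "finite (Cons i ` {q \<in> {q. i # q \<in> W}. prefix q p})"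
    using finite_prefixes_set by blast
  ultimately show ?thesis
    unfolding prefix_set_Cons by (subst card_Un_disjoint) auto
qed

lemma key:
  fixes \<Delta> :: real
  assumes D: "\<Delta> \<ge> 1"
  shows "W \<subseteq> internal t \<Longrightarrow> (\<forall>p\<in>internal t - W. \<Delta> \<le> real (num_children t p)) \<Longrightarrow>
    1 \<le> (\<Sum>p\<in>{p. is_leaf t p}. \<Delta> powr (real (card {q\<in>W. prefix q p}) - real (length p)))"
proof (induction t arbitrary: W)
  case (Node ts)
  show ?case
  proof (cases "ts = []")
    case True
    have "{p. is_leaf (Node ts) p} = {[]}"
      using True by (auto simp: is_leaf_def nc_Nil vertices_valid elim: valid.elims)
    moreover have "[] \<notin> W" using Node.prems(1) True by (auto simp: internal_def nc_Nil)
    moreover have "card {q\<in>W. prefix q []} = 0" using \<open>[] \<notin> W\<close> by auto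
    ultimately show ?thesis using D by (simp del: prefix_Nil)
  next
    case False
    define n where "n = length ts"
    define b :: real where "b = (if [] \<in> W then 1 else 0)"
    define S where "S i = (\<Sum>p\<in>{p. is_leaf (ts ! i) p}. \<Delta> powr (real (card {q\<in>{q. i # q \<in> W}. prefix q p}) - real (length p)))" for i
    have Si: "1 \<le> S i" if "i < n" for i
    proof -
      have mem: "ts ! i \<in> set ts" using that n_def by simp
      show ?thesis unfolding S_def
      proof (rule Node.IH[OF mem])
        show "{q. i # q \<in> W} \<subseteq> internal (ts ! i)"
          using Node.prems(1) that n_def by (auto simp: internal_Cons)
        show "\<forall>p\<in>internal (ts ! i) - {q. i # q \<in> W}. \<Delta> \<le> real (num_children (ts ! i) p)"
        proof
          fix p assume p: "p \<in> internal (ts ! i) - {q. i # q \<in> W}"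
          then have "i # p \<in> internal (Node ts) - W" using that n_def by (auto simp: internal_Cons)
          then show "\<Delta> \<le> real (num_children (ts ! i) p)"
            using Node.prems(2) that n_def nc_Cons[of i ts p] by force
        qed
      qed
    qed
    have inj: "inj_on (Cons i) A" for i :: nat and A by (auto simp: inj_on_def)
    have "(\<Sum>p\<in>{p. is_leaf (Node ts) p}. \<Delta> powr (real (card {q\<in>W. prefix q p}) - real (length p)))
        = (\<Sum>i<n. \<Sum>p\<in>Cons i ` {p. is_leaf (ts ! i) p}. \<Delta> powr (real (card {q\<in>W. prefix q p}) - real (length p)))"
      unfolding leaves_Node[OF False] n_def
      by (rule sum.UNION_disjoint) (auto simp: finite_leaves)
    also have "\<dots> = (\<Sum>i<n. \<Delta> powr (b - 1) * S i)"
    proof (rule sum.cong[OF refl])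
      fix i assume "i \<in> {..<n}"
      have "(\<Sum>p\<in>Cons i ` {p. is_leaf (ts ! i) p}. \<Delta> powr (real (card {q\<in>W. prefix q p}) - real (length p)))
          = (\<Sum>p\<in>{p. is_leaf (ts ! i) p}. \<Delta> powr (real (card {q\<in>W. prefix q (i # p)}) - real (length (i # p))))"
        by (subst sum.reindex[OF inj]) simp
      also have "\<dots> = (\<Sum>p\<in>{p. is_leaf (ts ! i) p}. \<Delta> powr (b - 1) * \<Delta> powr (real (card {q\<in>{q. i # q \<in> W}. prefix q p}) - real (length p)))"
      proof (rule sum.cong[OF refl])
        fix p
        have "real (card {q\<in>W. prefix q (i # p)}) - real (length (i # p))
            = (b - 1) + (real (card {q\<in>{q. i # q \<in> W}. prefix q p}) - real (length p))"
          by (simp add: card_prefix_Cons b_def)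
        then show "\<Delta> powr (real (card {q\<in>W. prefix q (i # p)}) - real (length (i # p))) = \<Delta> powr (b - 1) * \<Delta> powr (real (card {q\<in>{q. i # q \<in> W}. prefix q p}) - real (length p))"
          using D by (simp only: powr_add[symmetric])
      qed
      also have "\<dots> = \<Delta> powr (b - 1) * S i" by (simp add: S_def sum_distrib_left)
      finally show "(\<Sum>p\<in>Cons i ` {p. is_leaf (ts ! i) p}. \<Delta> powr (real (card {q\<in>W. prefix q p}) - real (length p))) = \<Delta> powr (b - 1) * S i" .
    qed
    also have "\<dots> \<ge> (\<Sum>i<n. \<Delta> powr (b - 1))"
    proof (rule sum_mono)
      fix i assume "i \<in> {..<n}"
      then have "1 \<le> S i" using Si by auto
      moreover have "0 \<le> \<Delta> powr (b - 1)" by simp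
      ultimately show "\<Delta> powr (b - 1) \<le> \<Delta> powr (b - 1) * S i"
        using mult_left_mono[of 1 "S i" "\<Delta> powr (b - 1)"] by simp
    qed
    finally have ge: "(\<Sum>i<n. \<Delta> powr (b - 1)) \<le> (\<Sum>p\<in>{p. is_leaf (Node ts) p}. \<Delta> powr (real (card {q\<in>W. prefix q p}) - real (length p)))" .
    have "1 \<le> real n * \<Delta> powr (b - 1)"
    proof (cases "[] \<in> W")
      case True
      then show ?thesis using False n_def D by (simp add: b_def Suc_le_eq)
    next
      case F: False
      have "[] \<in> internal (Node ts)" using False by (auto simp: internal_def nc_Nil intro: vertices.root)
      then have "\<Delta> \<le> real n" using Node.prems(2) F nc_Nil[of ts] n_def by force
      moreover have "\<Delta> powr (b - 1) = 1 / \<Delta>" using F D by (simp add: b_def powr_minus divide_inverse)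
      moreover have "1 \<le> real n / \<Delta>" using D \<open>\<Delta> \<le> real n\<close> by (simp add: le_divide_eq)
      ultimately show ?thesis by simp
    qed
    with ge show ?thesis by simp
  qed
qed

theorem mainTheorem16:
  fixes t :: rtree and L :: nat and \<Delta> s :: real and W :: "nat list set"
  assumes "L \<ge> 1"
    and "\<forall>p\<in>vertices t. length p \<le> L"
    and "\<Delta> \<ge> 1" and "s \<ge> 0"
    and "W \<subseteq> internal t"
    and "\<forall>p\<in>internal t - W. real (num_children t p) \<ge> \<Delta>"
    and "\<forall>p\<in>vertices t. real (card {q \<in> W. prefix q p}) \<le> s"
  shows "\<exists>T\<in>{0..L}. real (leaves_at_depth t T) \<ge> \<Delta> powr (real T - s) / real L"
proof (rule ccontr)
  assume neg: "\<not> ?thesis"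
  define S where "S = {p. is_leaf t p}"
  define N where "N T = real (leaves_at_depth t T)" for T
  have finS: "finite S" unfolding S_def by (rule finite_leaves)
  have D: "\<Delta> \<ge> 1" by fact
  have "1 \<le> (\<Sum>p\<in>S. \<Delta> powr (real (card {q\<in>W. prefix q p}) - real (length p)))"
    unfolding S_def using key[OF D, of W t] assms(5,6) by simp
  also have "\<dots> \<le> (\<Sum>p\<in>S. \<Delta> powr (s - real (length p)))"
  proof (rule sum_mono)
    fix p assume "p \<in> S"
    then have "p \<in> vertices t" by (simp add: S_def is_leaf_def)
    then have "real (card {q\<in>W. prefix q p}) \<le> s" using assms(7) by blast
    then show "\<Delta> powr (real (card {q\<in>W. prefix q p}) - real (length p)) \<le> \<Delta> powr (s - real (length p))"
      by (intro powr_mono D) simp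
  qed
  also have "\<dots> = (\<Sum>T\<in>length ` S. \<Sum>p\<in>{x. x \<in> S \<and> length x = T}. \<Delta> powr (s - real (length p)))"
    by (rule sum.image_gen[OF finS])
  also have "\<dots> = (\<Sum>T\<in>length ` S. N T * \<Delta> powr (s - real T))"
  proof (rule sum.cong[OF refl])
    fix T
    have "(\<Sum>p\<in>{x. x \<in> S \<and> length x = T}. \<Delta> powr (s - real (length p)))
       = (\<Sum>p\<in>{x. x \<in> S \<and> length x = T}. \<Delta> powr (s - real T))" by simp
    also have "\<dots> = N T * \<Delta> powr (s - real T)"
      by (simp add: N_def leaves_at_depth_def S_def)
    finally show "(\<Sum>p\<in>{x. x \<in> S \<and> length x = T}. \<Delta> powr (s - real (length p))) = N T * \<Delta> powr (s - real T)" .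
  qed
  also have "\<dots> \<le> (\<Sum>T\<in>{0..L}. N T * \<Delta> powr (s - real T))"
  proof (rule sum_mono2)
    show "length ` S \<subseteq> {0..L}" using assms(2) by (auto simp: S_def is_leaf_def)
    show "0 \<le> N b * \<Delta> powr (s - real b)" for b by (simp add: N_def)
  qed simp
  also have "\<dots> = N 0 * \<Delta> powr s + (\<Sum>T\<in>{0<..L}. N T * \<Delta> powr (s - real T))"
    by (subst sum.head) auto
  finally have big: "1 \<le> N 0 * \<Delta> powr s + (\<Sum>T\<in>{0<..L}. N T * \<Delta> powr (s - real T))" .
  have Lpos: "real L \<ge> 1" using assms(1) by simp
  have lt: "N T * \<Delta> powr (s - real T) < 1 / real L" if "T \<le> L" for T
  proof -
    have "N T < \<Delta> powr (real T - s) / real L" using neg that by (auto simp: N_def not_le)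
    then have "N T * \<Delta> powr (s - real T) < \<Delta> powr (real T - s) / real L * \<Delta> powr (s - real T)"
      using D by (intro mult_strict_right_mono) auto
    also have "\<dots> = 1 / real L" using D by (simp add: powr_add[symmetric])
    finally show ?thesis .
  qed
  show False
  proof (cases "N 0 = 0")
    case True
    have "(\<Sum>T\<in>{0<..L}. N T * \<Delta> powr (s - real T)) < (\<Sum>T\<in>{0<..L}. 1 / real L)"
      using assms(1) by (intro sum_strict_mono) (auto intro: lt)
    also have "\<dots> = 1" using Lpos by simp
    finally show False using big True by simp
  next
    case False
    then have "leaves_at_depth t 0 \<ge> 1" by (simp add: N_def)
    then have "N 0 \<ge> 1" by (simp add: N_def)
    moreover have "\<Delta> powr (real 0 - s) \<le> 1"
      using powr_mono[of "-s" 0 \<Delta>] assms(4) D by simp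
    then have "\<Delta> powr (real 0 - s) / real L \<le> 1" using Lpos
      by (auto simp: divide_le_eq)
    moreover have "\<not> \<Delta> powr (real 0 - s) / real L \<le> N 0" using neg[unfolded bex_simps, rule_format, of 0] by (simp add: N_def)
    ultimately show False by linarith
  qed
qed

end
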